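(* For all $\alpha\in[-1,1]$, $1-3P(\alpha)\ge\frac{1-\alpha}{2}$, where $$P(\alpha)=\frac19+\frac{\arcsin\alpha+\arcsin\frac{\alpha}{2}}{4\pi}+\frac{(\arcsin\alpha)^2-(\arcsin\frac{\alpha}{2})^2}{4\pi^2}.$$ *)

theory Defs
  imports Complex_Main
begin

definition P :: "real \<Rightarrow> real" where
  "P \<alpha> = 1/9 + (arcsin \<alpha> + arcsin (\<alpha>/2)) / (4*pi)
          + ((arcsin \<alpha>)^2 - (arcsin (\<alpha>/2))^2) / (4*pi^2)"

end

theory Submission
  imports Defs
begin

lemma f3: "(fact 3::real) = 6" by (simp add: eval_nat_numeral)

lemma sin_lb: "0 \<le> (x::real) \<Longrightarrow> x - x^3/6 \<le> sin x"
proof -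
  assume x: "0 \<le> x"
  have "\<bar>sin x - (\<Sum>m<3. sin_coeff m * x ^ m)\<bar> \<le> inverse (fact 3) * \<bar>x\<bar> ^ 3"
    by (rule Maclaurin_sin_bound)
  moreover have "(\<Sum>m<3. sin_coeff m * x ^ m) = x"
    by (simp add: eval_nat_numeral sin_coeff_def)
  moreover have "inverse (fact 3) * \<bar>x\<bar> ^ 3 = x^3/6"
    using x by (simp add: f3 inverse_eq_divide)
  ultimately have "\<bar>sin x - x\<bar> \<le> x^3/6" by simp
  from abs_le_D2[OF this] show ?thesis by linarith
qed

lemma one_minus_cos_le: "1 - cos (x::real) \<le> x^2/2"
proof -
  have c: "cos x = 1 - 2 * sin (x/2) ^ 2" using cos_double_sin[of "x/2"] by simp
  have "sin (x/2) ^ 2 \<le> (x/2)^2" using abs_sin_x_le_abs_x[of "x/2"] by (simp only: abs_le_square_iff)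
  thus ?thesis using c by (simp add: power2_eq_square)
qed

lemma one_minus_cos_ge: "0 \<le> (x::real) \<Longrightarrow> x \<le> 2 \<Longrightarrow> (x^2/2)*(1 - x^2/24)^2 \<le> 1 - cos x"
proof -
  assume x: "0 \<le> x" "x \<le> 2"
  have c: "cos x = 1 - 2 * sin (x/2) ^ 2" using cos_double_sin[of "x/2"] by simp
  have s: "x/2 - (x/2)^3/6 \<le> sin (x/2)" using sin_lb x by simp
  have nn: "0 \<le> x/2 - (x/2)^3/6"
  proof -
    have "(x/2)^2 \<le> 1" using x by (intro power_le_one) auto
    hence "(x/2)*(x/2)^2 \<le> (x/2)*1" using x by (intro mult_left_mono) auto
    hence "(x/2)^3 \<le> (x/2)" by (simp add: power3_eq_cube power2_eq_square)
    moreover have "0 \<le> (x/2)^3" using x by simp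
    ultimately show ?thesis by linarith
  qed
  have "(x/2 - (x/2)^3/6)^2 \<le> sin (x/2) ^ 2" using s nn by (rule power_mono)
  moreover have "(x/2 - (x/2)^3/6)^2 * 2 = (x^2/2)*(1 - x^2/24)^2"
    by (simp add: power2_eq_square power3_eq_cube field_simps)
  ultimately show ?thesis using c by linarith
qed

lemma pi_lt: "pi < 16/5"
proof (rule ccontr)
  assume "\<not> pi < 16/5"
  hence p: "8/15 \<le> pi/6" by simp
  have "pi/6 \<le> 2/3" using pi_less_4 by simp
  have s: "pi/6 - (pi/6)^3/6 \<le> 1/2" using sin_lb[of "pi/6"] sin_30 by simp
  define p where "p = pi/6"
  have "p - p^3/6 \<le> 1/2" "8/15 \<le> p" "p \<le> 2/3" using s p \<open>pi/6 \<le> 2/3\<close> by (simp_all add: p_def)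
  hence h: "p - p^3/6 \<le> 1/2" "8/15 \<le> p" "p \<le> 2/3" by auto
  have E: "p - p^3/6 - (8/15 - (8/15)^3/6) = (p - 8/15) * (1 - (p*p + 8/15*p + 64/225)/6)"
    by (simp add: power3_eq_cube field_simps)
  moreover have "p*p \<le> 4/9" using h mult_mono[of p "2/3" p "2/3"] by auto
  hence "0 \<le> (1 - (p*p + 8/15*p + 64/225)/6)" using h by auto
  hence N: "0 \<le> (p - 8/15) * (1 - (p*p + 8/15*p + 64/225)/6)" using h by auto
  have G: "0 \<le> p - p^3/6 - (8/15 - (8/15)^3/6)" by (subst E) (rule N)
  have C: "(8/15::real)^3/6 = 256/10125" by (simp add: power3_eq_cube)
  from G C h(1) show False by linarith
qed


lemma pi_ge3: "3 \<le> pi"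
proof -
  have "sin (pi/6) \<le> pi/6" by (rule sin_x_le_x) simp
  thus ?thesis by (simp add: sin_30)
qed

lemma bA: assumes "-1 \<le> \<alpha>" "\<alpha> \<le> 0"
  shows "arcsin (\<alpha>/2) \<le> -pi/6 + 2/3*(1+\<alpha>)"
proof -
  define d where "d = 2/3*(1+\<alpha>)"
  have d: "0 \<le> d" "d \<le> 2/3" using assms by (auto simp: d_def)
  have T: "-(pi/2) \<le> d - pi/6" "d - pi/6 \<le> pi/2" using d pi_ge3 by auto
  have sinT: "sin (d - pi/6) = (sqrt 3 * sin d)/2 - cos d/2"
    by (simp add: sin_diff sin_30 cos_30)
  have s3: "17/10 \<le> sqrt 3" by (rule real_le_rsqrt) (simp add: power2_eq_square)
  have sl: "d - d^3/6 \<le> sin d" using sin_lb d by simp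
  have cd: "cos d \<le> 1" by simp
  have dd: "d*d \<le> 4/9" using d mult_mono[of d "2/3" d "2/3"] by auto
  have d3: "d^3 \<le> 4/9*d" using mult_right_mono[OF dd d(1)] by (simp add: power3_eq_cube)
  hence g: "25/27*d \<le> d - d^3/6" by simp
  have "0 \<le> 25/27*d" using d by simp
  hence "17/10 * (25/27*d) \<le> sqrt 3 * (d - d^3/6)" using g s3 by (intro mult_mono) auto
  moreover have "sqrt 3 * (d - d^3/6) \<le> sqrt 3 * sin d" using sl by (intro mult_left_mono) auto
  ultimately have "17/10 * (25/27*d) \<le> sqrt 3 * sin d" by linarith
  moreover have "\<alpha>/2 = 3/4*d - 1/2" by (simp add: d_def field_simps)
  ultimately have "\<alpha>/2 \<le> sin (d - pi/6)" using sinT cd d by linarith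
  moreover have "\<bar>\<alpha>/2\<bar> \<le> 1" using assms by auto
  moreover have "\<bar>sin (d - pi/6)\<bar> \<le> 1" by simp
  ultimately have "arcsin (\<alpha>/2) \<le> arcsin (sin (d - pi/6))" using arcsin_le_mono by blast
  also have "\<dots> = d - pi/6" using T by (rule arcsin_sin)
  finally show ?thesis unfolding d_def by simp
qed

lemma bB: assumes "0 \<le> \<alpha>" "\<alpha> \<le> 1"
  shows "arcsin (\<alpha>/2) \<le> pi/6 - (1-\<alpha>)/2"
proof -
  define e where "e = (1-\<alpha>)/2"
  have e: "0 \<le> e" "e \<le> 1/2" using assms by (auto simp: e_def)
  have T: "-(pi/2) \<le> pi/6 - e" "pi/6 - e \<le> pi/2" using e pi_ge3 by auto
  have sinT: "sin (pi/6 - e) = cos e/2 - (sqrt 3 * sin e)/2"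
    by (simp add: sin_diff sin_30 cos_30)
  have s3: "sqrt 3 \<le> 7/4" by (rule real_le_lsqrt) (simp_all add: power2_eq_square)
  have c: "1 - cos e \<le> e^2/2" by (rule one_minus_cos_le)
  have ee: "e^2 \<le> e/2" using mult_left_mono[OF e(2) e(1)] by (simp add: power2_eq_square)
  have se: "sin e \<le> e" using e by (intro sin_x_le_x) 
  have s0: "0 \<le> sin e" using e pi_ge3 by (intro sin_ge_zero) auto
  have "sqrt 3 * sin e \<le> 7/4 * e" using s3 se s0 e by (intro mult_mono) auto
  moreover have "\<alpha>/2 = 1/2 - e" by (simp add: e_def field_simps)
  ultimately have "\<alpha>/2 \<le> sin (pi/6 - e)" using sinT c ee e by linarith
  moreover have "\<bar>\<alpha>/2\<bar> \<le> 1" using assms by auto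
  moreover have "\<bar>sin (pi/6 - e)\<bar> \<le> 1" by simp
  ultimately have "arcsin (\<alpha>/2) \<le> arcsin (sin (pi/6 - e))" using arcsin_le_mono by blast
  also have "\<dots> = pi/6 - e" using T by (rule arcsin_sin)
  finally show ?thesis unfolding e_def by simp
qed


theorem mainTheorem10:
  fixes \<alpha> :: real
  assumes "-1 \<le> \<alpha>" and "\<alpha> \<le> 1"
  shows "1 - 3 * P \<alpha> \<ge> (1 - \<alpha>) / 2"
proof -
  define a where "a = arcsin \<alpha>"
  define b where "b = arcsin (\<alpha>/2)"
  have sa: "sin a = \<alpha>" using assms by (simp add: a_def)
  have p3: "3 \<le> pi" "pi < 16/5" using pi_ge3 pi_lt by auto
  have key: "(a + pi/2)^2 - (pi/2 - b)^2 \<le> 2*pi^2/9*(1+3*\<alpha>)"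
  proof (cases "\<alpha> \<le> 0")
    case True
    define \<phi> where "\<phi> = a + pi/2"
    define y where "y = 1 + \<alpha>"
    have a0: "a \<le> 0" using arcsin_le_mono[of \<alpha> 0] assms True by (simp add: a_def)
    have a1: "-(pi/2) \<le> a" using arcsin_bounded[of \<alpha>] assms by (simp add: a_def)
    have \<phi>: "0 \<le> \<phi>" "\<phi> \<le> 2" using a0 a1 p3 by (auto simp: \<phi>_def)
    have c\<phi>: "cos \<phi> = -\<alpha>" by (simp add: \<phi>_def cos_add sa)
    have y1: "(\<phi>^2/2)*(1-\<phi>^2/24)^2 \<le> y" using one_minus_cos_ge[OF \<phi>] c\<phi> by (simp add: y_def)
    have "\<phi>^2 \<le> 2^2" using \<phi> by (intro power_mono) auto
    hence q: "5/6 \<le> 1 - \<phi>^2/24" by simp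
    hence "(5/6)^2 \<le> (1-\<phi>^2/24)^2" by (rule power_mono) simp
    hence "(\<phi>^2/2)*(5/6)^2 \<le> (\<phi>^2/2)*(1-\<phi>^2/24)^2" by (intro mult_left_mono) auto
    moreover have "(\<phi>^2/2)*(5/6)^2 = 25/72*\<phi>^2" by (simp add: power2_eq_square)
    ultimately have y2: "25/72*\<phi>^2 \<le> y" using y1 by linarith
    have y: "0 \<le> y" "y \<le> 1" using assms True by (auto simp: y_def)
    have bb: "b \<le> -pi/6 + 2/3*y" using bA assms True by (simp add: b_def y_def)
    have L: "0 \<le> 2*pi/3 - 2/3*y" using y p3 by simp
    have Lc: "2*pi/3 - 2/3*y \<le> pi/2 - b" using bb by simp
    have sq: "(2*pi/3 - 2/3*y)^2 \<le> (pi/2 - b)^2" using Lc L by (rule power_mono)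
    have "3*(5/3) \<le> pi*(pi-4/3)" using p3 by (intro mult_mono) auto
    hence K: "10/3 \<le> 2*pi^2/3 - 8*pi/9" by (simp add: power2_eq_square algebra_simps)
    have Ky: "10/3*y \<le> (2*pi^2/3 - 8*pi/9)*y" using K y by (intro mult_right_mono) auto
    have ex: "2*pi^2/9*(1+3*\<alpha>) - (\<phi>^2 - (2*pi/3 - 2/3*y)^2) = (2*pi^2/3 - 8*pi/9)*y + 4/9*y^2 - \<phi>^2"
      by (simp add: y_def power2_eq_square field_simps)
    have "0 \<le> y^2" "0 \<le> \<phi>^2" by simp_all
    thus ?thesis using ex Ky y2 sq unfolding \<phi>_def[symmetric] by linarith
  next
    case False
    define \<psi> where "\<psi> = pi/2 - a"
    define v where "v = 1 - \<alpha>"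
    have a0: "0 \<le> a" using arcsin_le_mono[of 0 \<alpha>] assms False by (simp add: a_def)
    have a1: "a \<le> pi/2" using arcsin_bounded[of \<alpha>] assms by (simp add: a_def)
    have \<psi>: "0 \<le> \<psi>" "\<psi> \<le> pi/2" using a0 a1 by (auto simp: \<psi>_def)
    have c\<psi>: "cos \<psi> = \<alpha>" by (simp add: \<psi>_def cos_diff sa)
    have v1: "v \<le> \<psi>^2/2" using one_minus_cos_le[of \<psi>] c\<psi> by (simp add: v_def)
    have v: "0 \<le> v" "v \<le> 1" using assms False by (auto simp: v_def)
    have bb: "b \<le> pi/6 - v/2" using bB assms False by (simp add: b_def v_def)
    have L: "0 \<le> pi/3 + v/2" using v p3 by simp
    have Lc: "pi/3 + v/2 \<le> pi/2 - b" using bb by simp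
    have sq: "(pi/3 + v/2)^2 \<le> (pi/2 - b)^2" using Lc L by (rule power_mono)
    have "pi*pi \<le> 16/5*(16/5)" using p3 by (intro mult_mono) auto
    hence Q: "0 \<le> 2*pi^2/3 - pi/3" "2*pi^2/3 - pi/3 \<le> 6" using p3
      by (auto simp: power2_eq_square)
    have vQ: "v*(2*pi^2/3 - pi/3) \<le> \<psi>^2/2*(2*pi^2/3 - pi/3)" using v1 Q by (intro mult_right_mono)
    have "\<psi>*(1 + (2*pi^2/3 - pi/3)/2) \<le> pi/2*(1 + (2*pi^2/3 - pi/3)/2)"
      using \<psi> Q by (intro mult_right_mono) auto
    also have "\<dots> \<le> pi/2*4" using Q by (intro mult_left_mono) auto
    finally have "\<psi>*(\<psi>*(1 + (2*pi^2/3 - pi/3)/2)) \<le> \<psi>*(pi/2*4)" using \<psi> by (intro mult_left_mono) auto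
    moreover have "\<psi>*(\<psi>*(1 + (2*pi^2/3 - pi/3)/2)) = \<psi>^2 + \<psi>^2/2*(2*pi^2/3 - pi/3)"
      by (simp add: power2_eq_square field_simps)
    moreover have "\<psi>*(pi/2*4) = 2*pi*\<psi>" by simp
    ultimately have \<psi>Q: "\<psi>^2 + \<psi>^2/2*(2*pi^2/3 - pi/3) \<le> 2*pi*\<psi>" by linarith
    have ex: "2*pi^2/9*(1+3*\<alpha>) - ((pi - \<psi>)^2 - (pi/3 + v/2)^2) = 2*pi*\<psi> - \<psi>^2 - v*(2*pi^2/3 - pi/3) + v^2/4"
      by (simp add: v_def power2_eq_square field_simps)
    have "(a + pi/2)^2 = (pi - \<psi>)^2" by (simp add: \<psi>_def add.commute)
    moreover have "0 \<le> v^2" by simp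
    ultimately show ?thesis using ex vQ \<psi>Q sq by linarith
  qed
  have eq: "1 - 3 * P \<alpha> - (1 - \<alpha>)/2 = (2*pi^2/9*(1+3*\<alpha>) - ((a + pi/2)^2 - (pi/2 - b)^2)) * (3/(4*pi^2))"
    unfolding P_def a_def[symmetric] b_def[symmetric] by (simp add: field_simps power2_eq_square)
  have "0 \<le> (2*pi^2/9*(1+3*\<alpha>) - ((a + pi/2)^2 - (pi/2 - b)^2)) * (3/(4*pi^2))"
    using key by (intro mult_nonneg_nonneg) auto
  thus ?thesis using eq by linarith
qed

end
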